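(* Let $h:\mathbb{R}^n\to\mathbb{R}$ be continuously differentiable and convex with $h^*:=\inf h$ and $\mathcal{X}^*:=\{x:h(x)=h^*\}\neq\emptyset$, and suppose $h$ satisfies the KL inequality. Then: (a) for every $\bar x\in\mathbb{R}^n$ there exist $\rho,\delta>0$ and $\vartheta\in(0,1)$ with $(h(x)-h^* )^\vartheta\le\rho\|\nabla h(x)\|$ for all $x\in B(\bar x;\delta)$; (b) for every compact set $S\subseteq\mathbb{R}^n$ there exist $\vartheta_S\in(0,1)$ and $\rho_S>0$ with $(h(x)-h^* )^{\vartheta_S}\le\rho_S\|\nabla h(x)\|$ for all $x\in S$.
   Context: $h$ satisfies the KL (Kurdyka–Łojasiewicz) inequality if for every $x^*\in\mathcal{X}^*$ there exist $\rho,\delta>0$ and $\vartheta\in(0,1)$ such that $(h(x)-h^* )^\vartheta\le\rho\|\nabla h(x)\|$ for all $x\in B(x^*;\delta)$. *)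

theory Defs
  imports "HOL-Analysis.Analysis"
begin

definition opt_val :: "('a \<Rightarrow> real) \<Rightarrow> real" where
  "opt_val h = (INF x. h x)"

definition opt_set :: "('a \<Rightarrow> real) \<Rightarrow> 'a set" where
  "opt_set h = {x. h x = opt_val h}"

definition KL_ineq :: "('a::real_normed_vector \<Rightarrow> real) \<Rightarrow> ('a \<Rightarrow> 'a) \<Rightarrow> bool" where
  "KL_ineq h grad \<longleftrightarrow>
     (\<forall>xs \<in> opt_set h. \<exists>\<rho>>0. \<exists>\<delta>>0. \<exists>\<theta>. 0 < \<theta> \<and> \<theta> < 1 \<and>
        (\<forall>x \<in> ball xs \<delta>. (h x - opt_val h) powr \<theta> \<le> \<rho> * norm (grad x)))"

end

theory Submission imports Defs begin
lemma powr_abs_real: "(x::real) powr a = \<bar>x\<bar> powr a"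
proof (cases "x \<ge> 0")
  case False
  then have "\<bar>x\<bar> = - x" by simp
  then show ?thesis by (simp add: uminus_powr_eq)
qed simp

lemma powr_shift:
  fixes t M a b :: real
  assumes "0 \<le> t" "t \<le> M" "0 < a" "a \<le> b" "b < 1"
  shows "t powr b \<le> max 1 M * t powr a"
proof (cases "t \<le> 1")
  case True
  show ?thesis
  proof (cases "t = 0")
    case True then show ?thesis by simp
  next
    case False
    then have "t powr b \<le> t powr a" using True assms by (intro powr_mono') auto
    moreover have "t powr a \<le> max 1 M * t powr a" by (simp add: mult_le_cancel_right1)
    ultimately show ?thesis by linarith
  qed
next
  case False
  have "t powr b = t powr a * t powr (b - a)" by (simp add: powr_add[symmetric])
  also have "t powr (b - a) \<le> t powr 1" using False assms by (intro powr_mono) auto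
  then have "t powr a * t powr (b - a) \<le> t powr a * t" using False by (intro mult_left_mono) auto
  also have "\<dots> \<le> t powr a * max 1 M" using assms by (intro mult_left_mono) auto
  finally show ?thesis by (simp add: mult.commute)
qed

lemma grad_ineq:
  fixes h :: "real ^ 'n \<Rightarrow> real" and grad :: "real ^ 'n \<Rightarrow> real ^ 'n"
  assumes grad: "\<And>x. GDERIV h x :> grad x"
    and cvx: "convex_on UNIV h"
  shows "h y \<ge> h x + grad x \<bullet> (y - x)"
proof -
  define g where "g t = h (x + t *\<^sub>R (y - x))" for t :: real
  have lin: "((\<lambda>t::real. x + t *\<^sub>R (y - x)) has_derivative (\<lambda>t. t *\<^sub>R (y - x))) (at 0)"
    by (auto intro!: derivative_eq_intros)
  have hd: "(h has_derivative (\<lambda>v. v \<bullet> grad x)) (at (x + 0 *\<^sub>R (y - x)))"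
    using grad[of x] by (simp add: gderiv_def)
  have "(g has_derivative (\<lambda>t. (t *\<^sub>R (y - x)) \<bullet> grad x)) (at 0)"
    unfolding g_def using has_derivative_compose[OF lin hd] by (simp add: o_def)
  then have d: "(g has_field_derivative (grad x \<bullet> (y - x))) (at 0)"
    by (simp add: has_field_derivative_def inner_commute mult_commute_abs)
  have cg: "convex_on UNIV g"
    unfolding convex_on_def g_def
  proof (intro conjI allI impI ballI)
    show "convex (UNIV::real set)" by simp
  next
    fix u v :: real and a b :: real
    assume "0 \<le> a" "0 \<le> b" "a + b = 1"
    have "x + (a * u + b * v) *\<^sub>R (y - x) = a *\<^sub>R (x + u *\<^sub>R (y - x)) + b *\<^sub>R (x + v *\<^sub>R (y - x))"
    proof -
      have "x + (a * u + b * v) *\<^sub>R (y - x) = (a + b) *\<^sub>R x + (a * u + b * v) *\<^sub>R (y - x)"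
        using \<open>a + b = 1\<close> by simp
      also have "\<dots> = a *\<^sub>R (x + u *\<^sub>R (y - x)) + b *\<^sub>R (x + v *\<^sub>R (y - x))"
        by (simp add: algebra_simps)
      finally show ?thesis .
    qed
    then show "h (x + (a *\<^sub>R u + b *\<^sub>R v) *\<^sub>R (y - x)) \<le> a * h (x + u *\<^sub>R (y - x)) + b * h (x + v *\<^sub>R (y - x))"
      using cvx \<open>0 \<le> a\<close> \<open>0 \<le> b\<close> \<open>a + b = 1\<close> by (simp add: convex_on_def)
  qed
  have "g 1 - g 0 \<ge> (grad x \<bullet> (y - x)) * (1 - 0)"
    by (rule convex_on_imp_above_tangent[OF cg]) (use d in auto)
  then show ?thesis by (simp add: g_def)
qed

theorem theorem3p10:
  fixes h :: "real ^ 'n \<Rightarrow> real" and grad :: "real ^ 'n \<Rightarrow> real ^ 'n"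
  assumes grad: "\<And>x. GDERIV h x :> grad x"
    and grad_cont: "continuous_on UNIV grad"
    and cvx: "convex_on UNIV h"
    and nonempty: "opt_set h \<noteq> {}"
    and KL: "KL_ineq h grad"
  shows "(\<forall>xb. \<exists>\<rho>>0. \<exists>\<delta>>0. \<exists>\<theta>. 0 < \<theta> \<and> \<theta> < 1 \<and>
            (\<forall>x \<in> ball xb \<delta>. (h x - opt_val h) powr \<theta> \<le> \<rho> * norm (grad x)))
       \<and> (\<forall>S. compact S \<longrightarrow> (\<exists>\<theta>S \<rho>S. 0 < \<theta>S \<and> \<theta>S < 1 \<and> \<rho>S > 0 \<and>
            (\<forall>x \<in> S. (h x - opt_val h) powr \<theta>S \<le> \<rho>S * norm (grad x))))"
proof -
  define c where "c = opt_val h"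
  have hcont: "isCont h x" for x
    using grad[of x] unfolding gderiv_def by (rule has_derivative_continuous)
  have gcont: "isCont grad x" for x
    using grad_cont by (simp add: continuous_on_eq_continuous_at)
  have A: "\<exists>\<rho>>0. \<exists>\<delta>>0. \<exists>\<theta>. 0 < \<theta> \<and> \<theta> < 1 \<and>
            (\<forall>x \<in> ball xb \<delta>. (h x - c) powr \<theta> \<le> \<rho> * norm (grad x))" for xb
  proof (cases "grad xb = 0")
    case True
    have min: "h xb \<le> h y" for y using grad_ineq[OF grad cvx, of xb y] True by simp
    have "h xb = (INF x. h x)"
      by (rule sym, rule cInf_eq_minimum) (use min in auto)
    then have "xb \<in> opt_set h" by (simp add: opt_set_def opt_val_def)
    then show ?thesis using KL unfolding KL_ineq_def c_def by blast
  next
    case False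
    define g where "g = norm (grad xb)"
    have g: "g > 0" using False by (simp add: g_def)
    obtain d1 where d1: "d1 > 0" "\<forall>x. dist x xb < d1 \<longrightarrow> dist (grad x) (grad xb) < g / 2"
      using gcont[of xb] g unfolding continuous_at_eps_delta by (metis half_gt_zero)
    obtain d2 where d2: "d2 > 0" "\<forall>x. dist x xb < d2 \<longrightarrow> dist (h x) (h xb) < 1"
      using hcont[of xb] unfolding continuous_at_eps_delta by (metis zero_less_one)
    define B where "B = \<bar>h xb - c\<bar> + 1"
    show ?thesis
    proof (intro exI conjI ballI)
      show "2 * B / g > 0" using g unfolding B_def by (smt (verit) divide_pos_pos abs_ge_zero)
      show "min d1 d2 > 0" using d1 d2 by simp
      show "(0::real) < 1/2" "(1/2::real) < 1" by auto
      fix x assume x: "x \<in> ball xb (min d1 d2)"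
      then have "dist x xb < d1" "dist x xb < d2" by (auto simp: dist_commute)
      then have e1: "norm (grad x - grad xb) < g / 2" and e2: "\<bar>h x - h xb\<bar> < 1"
        using d1 d2 by (auto simp: dist_norm dist_real_def)
      have "norm (grad xb) \<le> norm (grad x) + norm (grad xb - grad x)" by (rule norm_triangle_sub)
      then have gx: "norm (grad x) \<ge> g / 2" using e1 unfolding g_def
        by (simp add: norm_minus_commute)
      have hx: "\<bar>h x - c\<bar> \<le> B" using e2 unfolding B_def by linarith
      have "(h x - c) powr (1/2) = \<bar>h x - c\<bar> powr (1/2)" by (rule powr_abs_real)
      also have "\<dots> = sqrt \<bar>h x - c\<bar>" by (simp add: powr_half_sqrt)
      also have "\<dots> \<le> sqrt B" using hx by simp
      also have "\<dots> \<le> B"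
      proof -
        have b1: "1 \<le> sqrt B" by (simp add: B_def)
        then have "sqrt B * 1 \<le> sqrt B * sqrt B" by (intro mult_left_mono) auto
        then show ?thesis by (simp add: B_def)
      qed
      also have "B = 2 * B / g * (g / 2)" using g by simp
      also have "\<dots> \<le> 2 * B / g * norm (grad x)"
        using gx g by (intro mult_left_mono) (auto simp: B_def)
      finally show "(h x - c) powr (1/2) \<le> 2 * B / g * norm (grad x)" .
    qed
  qed
  obtain R D T where RDT: "\<And>xb. R xb > 0 \<and> D xb > 0 \<and> 0 < T xb \<and> T xb < 1 \<and>
      (\<forall>x \<in> ball xb (D xb). (h x - c) powr T xb \<le> R xb * norm (grad x))"
    using A by metis
  have B: "\<exists>\<theta>S \<rho>S. 0 < \<theta>S \<and> \<theta>S < 1 \<and> \<rho>S > 0 \<and>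
            (\<forall>x \<in> S. (h x - c) powr \<theta>S \<le> \<rho>S * norm (grad x))" if S: "compact S" for S
  proof (cases "S = {}")
    case True
    then show ?thesis by (intro exI[of _ "1/2"] exI[of _ 1]) auto
  next
    case False
    obtain F where F: "F \<subseteq> S" "finite F" "S \<subseteq> (\<Union>xb\<in>F. ball xb (D xb))"
    proof (rule compactE_image[OF S, of S "\<lambda>xb. ball xb (D xb)"])
      show "S \<subseteq> (\<Union>xb\<in>S. ball xb (D xb))"
      proof
        fix x assume "x \<in> S"
        moreover have "x \<in> ball x (D x)" using RDT[of x] by simp
        ultimately show "x \<in> (\<Union>xb\<in>S. ball xb (D xb))" by blast
      qed
    qed auto
    have Fne: "F \<noteq> {}" using F False by auto
    have "continuous_on S (\<lambda>x. h x - c)"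
      using hcont by (intro continuous_at_imp_continuous_on continuous_intros) auto
    then have "bounded ((\<lambda>x. h x - c) ` S)"
      using S by (intro compact_imp_bounded compact_continuous_image)
    then obtain M where M: "\<And>x. x \<in> S \<Longrightarrow> \<bar>h x - c\<bar> \<le> M"
      unfolding bounded_iff by auto
    define th where "th = Max (T ` F)"
    define rh where "rh = max 1 M * Max (R ` F)"
    have thF: "\<exists>xb\<in>F. th = T xb" unfolding th_def using F Fne
      by (metis (no_types, lifting) Max_in finite_imageI image_iff image_is_empty)
    have rF: "\<exists>xb\<in>F. Max (R ` F) = R xb" using F Fne
      by (metis (no_types, lifting) Max_in finite_imageI image_iff image_is_empty)
    show ?thesis
    proof (intro exI conjI ballI)
      obtain x1 where "th = T x1" using thF by blast
      then show "0 < th" "th < 1" using RDT[of x1] by auto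
      obtain x2 where "Max (R ` F) = R x2" using rF by blast
      then have "Max (R ` F) > 0" using RDT[of x2] by simp
      then show "rh > 0" unfolding rh_def by simp
      fix x assume x: "x \<in> S"
      then obtain xb where xb: "xb \<in> F" "x \<in> ball xb (D xb)" using F by auto
      have Tle: "T xb \<le> th" unfolding th_def using F xb by auto
      have Rle: "R xb \<le> Max (R ` F)" using F xb by auto
      have "(h x - c) powr th = \<bar>h x - c\<bar> powr th" by (rule powr_abs_real)
      also have "\<dots> \<le> max 1 M * \<bar>h x - c\<bar> powr T xb"
        using powr_shift[of "\<bar>h x - c\<bar>" M "T xb" th] M[OF x] RDT[of xb] Tle \<open>th < 1\<close> by auto
      also have "\<bar>h x - c\<bar> powr T xb = (h x - c) powr T xb" by (rule powr_abs_real[symmetric])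
      also have "max 1 M * \<dots> \<le> max 1 M * (R xb * norm (grad x))"
        using RDT[of xb] xb by (intro mult_left_mono) auto
      also have "\<dots> \<le> rh * norm (grad x)" unfolding rh_def
        using Rle by (simp add: mult.assoc mult_left_mono mult_right_mono)
      finally show "(h x - c) powr th \<le> rh * norm (grad x)" .
    qed
  qed
  show ?thesis unfolding c_def[symmetric]
  proof (intro conjI allI impI)
    fix xb show "\<exists>\<rho>>0. \<exists>\<delta>>0. \<exists>\<theta>. 0 < \<theta> \<and> \<theta> < 1 \<and>
            (\<forall>x \<in> ball xb \<delta>. (h x - c) powr \<theta> \<le> \<rho> * norm (grad x))" by (rule A)
  next
    fix S :: "(real ^ 'n) set" assume "compact S"
    then show "\<exists>\<theta>S \<rho>S. 0 < \<theta>S \<and> \<theta>S < 1 \<and> \<rho>S > 0 \<and>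
            (\<forall>x \<in> S. (h x - c) powr \<theta>S \<le> \<rho>S * norm (grad x))" by (rule B)
  qed
qed

end
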